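(* Let $G>0$, $T>0$, and let $F\colon\mathbb R\to\mathbb R$ be continuous and $T$-periodic. Then the equation \[ \ddot x=\left(G\sqrt{1-x^2}-\frac{\dot x^2}{1-x^2}\right)x-(1-x^2)F(t) \] has a $T$-periodic solution $x\colon\mathbb R\to(-1,1)$. *)

theory Defs
  imports "HOL-Analysis.Analysis"
begin

end

theory Submission
  imports Defs
begin


lemma int_deriv:
  fixes g :: "real \<Rightarrow> real"
  assumes "continuous_on UNIV g" "a < t"
  shows "((\<lambda>x. integral {a..x} g) has_real_derivative g t) (at t)"
proof -
  have "((\<lambda>x. integral {a..x} g) has_real_derivative g t) (at t within {a..t+1})"
    by (rule integral_has_real_derivative) (use assms in \<open>auto intro: continuous_on_subset\<close>)
  moreover have "at t within {a..t+1} = at t" using assms by (intro at_within_Icc_at) auto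
  ultimately show ?thesis by simp
qed

definition WI :: "(real \<Rightarrow> real) \<Rightarrow> real \<Rightarrow> real \<Rightarrow> real" where
  "WI g T x = integral {x-T..x} g"

lemma WI_deriv:
  fixes g :: "real \<Rightarrow> real"
  assumes g: "continuous_on UNIV g" and T: "T > 0"
  shows "(WI g T has_real_derivative (g t - g (t - T))) (at t)"
proof -
  define a where "a = t - T - 1"
  have d1: "((\<lambda>x. integral {a..x} g) has_real_derivative g t) (at t)"
    using int_deriv[OF g, of a t] T by (simp add: a_def)
  have "((\<lambda>x. integral {a..x} g) has_real_derivative g (t - T)) (at (t + (-T)))"
    using int_deriv[OF g, of a "t-T"] by (simp add: a_def)
  then have d2: "((\<lambda>x. integral {a..x + (-T)} g) has_real_derivative g (t - T)) (at t)"
    by (subst (asm) DERIV_shift) 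
  have d: "((\<lambda>x. integral {a..x} g - integral {a..x + (-T)} g) has_real_derivative g t - g (t - T)) (at t)"
    by (rule DERIV_diff[OF d1 d2])
  show ?thesis
  proof (rule has_field_derivative_transform_within_open[OF d, of "{a+T<..}"])
    fix x assume x: "x \<in> {a+T<..}"
    have "g integrable_on {a..x}"
      by (rule integrable_continuous_interval) (use g in \<open>auto intro: continuous_on_subset\<close>)
    moreover have "a \<le> x - T" "x - T \<le> x" using x T by auto
    ultimately have "integral {a..x-T} g + integral {x-T..x} g = integral {a..x} g"
      using Henstock_Kurzweil_Integration.integral_combine by blast
    then show "integral {a..x} g - integral {a..x + - T} g = WI g T x"
      by (simp add: WI_def)
  qed (auto simp: a_def)
qed

lemma WI_le:
  fixes g1 g2 :: "real \<Rightarrow> real"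
  assumes "continuous_on UNIV g1" "continuous_on UNIV g2" "\<And>s. g1 s \<le> g2 s"
  shows "WI g1 T x \<le> WI g2 T x"
  unfolding WI_def
  by (rule integral_le) (use assms in \<open>auto intro!: integrable_continuous_interval intro: continuous_on_subset\<close>)

lemma WI_shift:
  fixes g :: "real \<Rightarrow> real"
  shows "WI g T (x + T) = WI (\<lambda>s. g (s + T)) T x"
  unfolding WI_def using integral_shift_real_ivl[of x T "x + T" g, symmetric] by (simp add: algebra_simps)

lemma WI_cmult:
  "WI (\<lambda>s. c * g s) T x = c * WI g T x"
  unfolding WI_def by simp

lemma WI_exp:
  fixes m :: real
  assumes "m \<noteq> 0" "T \<ge> 0"
  shows "WI (\<lambda>s. exp (m * s)) T x = (exp (m*x) - exp (m*(x-T))) / m"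
proof -
  have "((\<lambda>s. exp (m * s)) has_integral (exp (m*x)/m - exp (m*(x-T))/m)) {x-T..x}"
    apply (rule fundamental_theorem_of_calculus)
    using assms by (auto intro!: derivative_eq_intros simp: has_real_derivative_iff_has_vector_derivative[symmetric])
  then show ?thesis unfolding WI_def by (simp add: integral_unique diff_divide_distrib)
qed

definition Aop :: "real \<Rightarrow> real \<Rightarrow> (real \<Rightarrow> real) \<Rightarrow> real \<Rightarrow> real" where
  "Aop m T h t = WI (\<lambda>s. exp (m * s) * h s) T t / (1 - exp (-m*T))"
definition Bop :: "real \<Rightarrow> real \<Rightarrow> (real \<Rightarrow> real) \<Rightarrow> real \<Rightarrow> real" where
  "Bop m T h t = WI (\<lambda>s. exp (-m * s) * h s) T (t+T) / (1 - exp (-m*T))"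
definition Kop :: "real \<Rightarrow> real \<Rightarrow> (real \<Rightarrow> real) \<Rightarrow> real \<Rightarrow> real" where
  "Kop m T h t = (exp (-m*t) * Aop m T h t + exp (m*t) * Bop m T h t) / (2*m)"
definition Kd :: "real \<Rightarrow> real \<Rightarrow> (real \<Rightarrow> real) \<Rightarrow> real \<Rightarrow> real" where
  "Kd m T h t = (- exp (-m*t) * Aop m T h t + exp (m*t) * Bop m T h t) / 2"

lemma cpos: "m > 0 \<Longrightarrow> T > 0 \<Longrightarrow> 1 - exp (-m*T) > (0::real)"
  by simp

lemma A_deriv:
  assumes m: "m > 0" and T: "T > 0" and h: "continuous_on UNIV h" and per: "\<And>t. h (t + T) = h t"
  shows "(Aop m T h has_real_derivative exp (m * t) * h t) (at t)"
proof -
  have g: "continuous_on UNIV (\<lambda>s. exp (m * s) * h s)" by (intro continuous_intros h)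
  have "h (t - T) = h t" using per[of "t - T"] by simp
  moreover have "exp (m*(t-T)) = exp (m*t) * exp (-m*T)" by (simp add: algebra_simps flip: exp_add)
  ultimately have e: "exp (m*t) * h t - exp (m*(t-T)) * h (t-T) = exp (m*t) * h t * (1 - exp (-m*T))"
    by (simp add: algebra_simps)
  have d0: "(WI (\<lambda>s. exp (m * s) * h s) T has_real_derivative exp (m*t) * h t * (1 - exp (-m*T))) (at t)"
    using WI_deriv[OF g T, of t] unfolding e .
  have d1: "((\<lambda>x. WI (\<lambda>s. exp (m * s) * h s) T x / (1 - exp (-m*T))) has_real_derivative
         (exp (m*t) * h t * (1 - exp (-m*T))) / (1 - exp (-m*T))) (at t)"
    by (rule DERIV_cdivide[OF d0])
  have c0: "1 - exp (-m*T) \<noteq> 0" using cpos[OF m T] by linarith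
  have eq: "(exp (m*t) * h t * (1 - exp (-m*T))) / (1 - exp (-m*T)) = exp (m*t) * h t"
    by (rule nonzero_mult_div_cancel_right[OF c0])
  show ?thesis using d1 unfolding eq Aop_def[abs_def] .
qed

lemma B_deriv:
  assumes m: "m > 0" and T: "T > 0" and h: "continuous_on UNIV h" and per: "\<And>t. h (t + T) = h t"
  shows "(Bop m T h has_real_derivative - exp (-m*t) * h t) (at t)"
proof -
  have g: "continuous_on UNIV (\<lambda>s. exp (-m * s) * h s)" by (intro continuous_intros h)
  have "exp (-m*(t+T)) = exp (-m*t) * exp (-m*T)" by (simp add: algebra_simps flip: exp_add)
  then have e: "exp (-m*(t+T)) * h (t+T) - exp (-m*(t+T-T)) * h (t+T-T) = - exp (-m*t) * h t * (1 - exp (-m*T))"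
    using per[of t] by (simp add: algebra_simps)
  have "(WI (\<lambda>s. exp (-m * s) * h s) T has_real_derivative
     - exp (-m*t) * h t * (1 - exp (-m*T))) (at (t + T))"
    using WI_deriv[OF g T, of "t+T"] unfolding e .
  then have d0: "((\<lambda>x. WI (\<lambda>s. exp (-m * s) * h s) T (x+T)) has_real_derivative
     - exp (-m*t) * h t * (1 - exp (-m*T))) (at t)"
    by (simp add: DERIV_shift)
  have d1: "((\<lambda>x. WI (\<lambda>s. exp (-m * s) * h s) T (x+T) / (1 - exp (-m*T))) has_real_derivative
         (- exp (-m*t) * h t * (1 - exp (-m*T))) / (1 - exp (-m*T))) (at t)"
    by (rule DERIV_cdivide[OF d0])
  have c0: "1 - exp (-m*T) \<noteq> 0" using cpos[OF m T] by linarith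
  have eq: "(- exp (-m*t) * h t * (1 - exp (-m*T))) / (1 - exp (-m*T)) = - exp (-m*t) * h t"
    by (rule nonzero_mult_div_cancel_right[OF c0])
  show ?thesis using d1 unfolding eq Bop_def[abs_def] .
qed

lemma exp_derivs:
  "((\<lambda>t. exp (-m*t)) has_real_derivative -m * exp (-m*t)) (at t)"
  "((\<lambda>t. exp (m*t)) has_real_derivative m * exp (m*t)) (at (t::real))"
  by (auto intro!: derivative_eq_intros)

lemma K_deriv:
  assumes m: "m > 0" and T: "T > 0" and h: "continuous_on UNIV h" and per: "\<And>t. h (t + T) = h t"
  shows "(Kop m T h has_real_derivative Kd m T h t) (at t)"
proof -
  note AD = A_deriv[OF assms, of t] and BD = B_deriv[OF assms, of t]
  have d: "((\<lambda>t. (exp (-m*t) * Aop m T h t + exp (m*t) * Bop m T h t) / (2*m)) has_real_derivative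
     ((-m * exp (-m*t)) * Aop m T h t + (exp (m*t) * h t) * exp (-m*t)
      + ((m * exp (m*t)) * Bop m T h t + (- exp (-m*t) * h t) * exp (m*t))) / (2*m)) (at t)"
    using DERIV_mult[OF exp_derivs(1)[of m t] AD] DERIV_mult[OF exp_derivs(2)[of m t] BD]
    by (intro DERIV_cdivide DERIV_add)
  have e1: "exp (-m*t) * exp (m*t) = 1" by (simp flip: exp_add)
  have "((-m * exp (-m*t)) * Aop m T h t + (exp (m*t) * h t) * exp (-m*t)
      + ((m * exp (m*t)) * Bop m T h t + (- exp (-m*t) * h t) * exp (m*t))) / (2*m)
      = (m * (- exp (-m*t) * Aop m T h t + exp (m*t) * Bop m T h t)) / (2*m)"
    using e1 by (simp add: algebra_simps)
  also have "\<dots> = Kd m T h t" using m unfolding Kd_def by simp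
  finally have "((\<lambda>t. (exp (-m*t) * Aop m T h t + exp (m*t) * Bop m T h t) / (2*m)) has_real_derivative
      Kd m T h t) (at t)"
    using d by simp
  then show ?thesis unfolding Kop_def[abs_def] .
qed

lemma Kd_deriv:
  assumes m: "m > 0" and T: "T > 0" and h: "continuous_on UNIV h" and per: "\<And>t. h (t + T) = h t"
  shows "(Kd m T h has_real_derivative m^2 * Kop m T h t - h t) (at t)"
proof -
  note AD = A_deriv[OF assms, of t] and BD = B_deriv[OF assms, of t]
  have d: "((\<lambda>t. (- exp (-m*t) * Aop m T h t + exp (m*t) * Bop m T h t) / 2) has_real_derivative
     (-(-m * exp (-m*t)) * Aop m T h t + (exp (m*t) * h t) * - exp (-m*t)
      + ((m * exp (m*t)) * Bop m T h t + (- exp (-m*t) * h t) * exp (m*t))) / 2) (at t)"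
    using DERIV_mult[OF DERIV_minus[OF exp_derivs(1)[of m t]] AD] DERIV_mult[OF exp_derivs(2)[of m t] BD]
    by (intro DERIV_cdivide DERIV_add)
  moreover have e1: "exp (-m*t) * exp (m*t) = 1" by (simp flip: exp_add)
  have "(-(-m * exp (-m*t)) * Aop m T h t + (exp (m*t) * h t) * - exp (-m*t)
      + ((m * exp (m*t)) * Bop m T h t + (- exp (-m*t) * h t) * exp (m*t))) / 2
      = m * (exp (-m*t) * Aop m T h t + exp (m*t) * Bop m T h t) / 2 - h t"
    using e1 by (simp add: field_simps)
  also have "\<dots> = m^2 * Kop m T h t - h t"
    using m unfolding Kop_def by (simp add: power2_eq_square)
  finally have "((\<lambda>t. (- exp (-m*t) * Aop m T h t + exp (m*t) * Bop m T h t) / 2) has_real_derivative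
      m^2 * Kop m T h t - h t) (at t)"
    using d by simp
  then show ?thesis unfolding Kd_def[abs_def] .
qed

lemma A_per:
  assumes per: "\<And>t. h (t + T) = h t"
  shows "Aop m T h (t + T) = exp (m*T) * Aop m T h t"
proof -
  have "WI (\<lambda>s. exp (m * s) * h s) T (t + T) = WI (\<lambda>s. exp (m*T) * (exp (m * s) * h s)) T t"
    unfolding WI_shift by (simp add: per algebra_simps flip: exp_add)
  then show ?thesis unfolding Aop_def WI_cmult by simp
qed

lemma B_per:
  assumes per: "\<And>t. h (t + T) = h t"
  shows "Bop m T h (t + T) = exp (-m*T) * Bop m T h t"
proof -
  have "WI (\<lambda>s. exp (-m * s) * h s) T (t + T + T) = WI (\<lambda>s. exp (-m*T) * (exp (-m * s) * h s)) T (t + T)"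
    unfolding WI_shift[of _ T "t+T"] by (simp add: per algebra_simps flip: exp_add)
  then show ?thesis unfolding Bop_def WI_cmult by simp
qed

lemma K_per:
  assumes per: "\<And>t. h (t + T) = h t"
  shows "Kop m T h (t + T) = Kop m T h t"
proof -
  have "exp (-m*(t+T)) * exp (m*T) = exp (-m*t)" "exp (m*(t+T)) * exp (-m*T) = exp (m*t)"
    by (simp_all add: algebra_simps flip: exp_add)
  then show ?thesis unfolding Kop_def A_per[of h T, OF per] B_per[of h T, OF per]
    by (simp add: algebra_simps)
qed

lemma A_mono:
  assumes m: "m > 0" and T: "T > 0" and "continuous_on UNIV h1" "continuous_on UNIV h2" "\<And>s. h1 s \<le> h2 s"
  shows "Aop m T h1 t \<le> Aop m T h2 t"
  unfolding Aop_def using cpos[OF m T]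
  by (intro divide_right_mono WI_le) (use assms in \<open>auto intro!: continuous_intros\<close>)

lemma B_mono:
  assumes m: "m > 0" and T: "T > 0" and "continuous_on UNIV h1" "continuous_on UNIV h2" "\<And>s. h1 s \<le> h2 s"
  shows "Bop m T h1 t \<le> Bop m T h2 t"
  unfolding Bop_def using cpos[OF m T]
  by (intro divide_right_mono WI_le) (use assms in \<open>auto intro!: continuous_intros\<close>)

lemma K_mono:
  assumes m: "m > 0" and T: "T > 0" and "continuous_on UNIV h1" "continuous_on UNIV h2" "\<And>s. h1 s \<le> h2 s"
  shows "Kop m T h1 t \<le> Kop m T h2 t"
  unfolding Kop_def using m A_mono[OF assms, of t] B_mono[OF assms, of t]
  by (intro divide_right_mono add_mono mult_left_mono) auto

lemma A_const:
  assumes m: "m > 0" and T: "T > 0"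
  shows "Aop m T (\<lambda>_. k) t = k * exp (m*t) / m"
proof -
  have "WI (\<lambda>s. exp (m * s) * k) T t = k * WI (\<lambda>s. exp (m * s)) T t"
    using WI_cmult[of k "\<lambda>s. exp (m * s)" T t] by (simp add: mult.commute)
  also have "\<dots> = k * ((exp (m*t) - exp (m*(t-T))) / m)" using WI_exp[of m T t] m T by simp
  also have "exp (m*(t-T)) = exp (m*t) * exp (-m*T)" by (simp add: algebra_simps flip: exp_add)
  also have "k * ((exp (m*t) - exp (m*t) * exp (-m*T)) / m) = (k * exp (m*t) / m) * (1 - exp (-m*T))"
    by (simp add: algebra_simps diff_divide_distrib)
  finally have W: "WI (\<lambda>s. exp (m * s) * k) T t = (k * exp (m*t) / m) * (1 - exp (-m*T))" .
  have c0: "1 - exp (-m*T) \<noteq> 0" using cpos[OF m T] by linarith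
  show ?thesis unfolding Aop_def W by (rule nonzero_mult_div_cancel_right[OF c0])
qed

lemma B_const:
  assumes m: "m > 0" and T: "T > 0"
  shows "Bop m T (\<lambda>_. k) t = k * exp (-m*t) / m"
proof -
  have "WI (\<lambda>s. exp (-m * s) * k) T (t+T) = k * WI (\<lambda>s. exp ((-m) * s)) T (t+T)"
    using WI_cmult[of k "\<lambda>s. exp ((-m) * s)" T "t+T"] by (simp add: mult.commute)
  also have "\<dots> = k * ((exp ((-m)*(t+T)) - exp ((-m)*(t+T-T))) / (-m))" using WI_exp[of "-m" T "t+T"] m T by simp
  also have "exp ((-m)*(t+T)) = exp (-m*t) * exp (-m*T)" by (simp add: algebra_simps flip: exp_add)
  also have "k * ((exp (-m*t) * exp (-m*T) - exp ((-m)*(t+T-T))) / (-m)) = (k * exp (-m*t) / m) * (1 - exp (-m*T))"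
    by (simp add: algebra_simps diff_divide_distrib)
  finally have W: "WI (\<lambda>s. exp (-m * s) * k) T (t+T) = (k * exp (-m*t) / m) * (1 - exp (-m*T))" .
  have c0: "1 - exp (-m*T) \<noteq> 0" using cpos[OF m T] by linarith
  show ?thesis unfolding Bop_def W by (rule nonzero_mult_div_cancel_right[OF c0])
qed

lemma K_const:
  assumes m: "m > 0" and T: "T > 0"
  shows "Kop m T (\<lambda>_. k) t = k / m^2"
proof -
  have "exp (-m*t) * exp (m*t) = 1" by (simp flip: exp_add)
  then show ?thesis unfolding Kop_def A_const[OF m T] B_const[OF m T] using m
    by (simp add: field_simps power2_eq_square)
qed


lemma sin_lip: "\<bar>sin (a::real) - sin b\<bar> \<le> \<bar>a - b\<bar>"
proof -
  have "\<bar>sin a - sin b\<bar> = 2 * \<bar>sin ((a - b) / 2)\<bar> * \<bar>cos ((a + b) / 2)\<bar>"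
    unfolding sin_diff_sin by (simp add: abs_mult)
  also have "\<dots> \<le> 2 * \<bar>(a - b) / 2\<bar> * 1"
    by (intro mult_mono abs_sin_x_le_abs_x) auto
  finally show ?thesis by simp
qed

lemma cos_lip: "\<bar>cos (a::real) - cos b\<bar> \<le> \<bar>a - b\<bar>"
proof -
  have "\<bar>cos a - cos b\<bar> = 2 * \<bar>sin ((a + b) / 2)\<bar> * \<bar>sin ((b - a) / 2)\<bar>"
    unfolding cos_diff_cos by (simp add: abs_mult)
  also have "\<dots> \<le> 2 * 1 * \<bar>(b - a) / 2\<bar>"
    by (intro mult_mono abs_sin_x_le_abs_x) auto
  finally show ?thesis by simp
qed

lemma deriv_lip:
  fixes f :: "real \<Rightarrow> real"
  assumes d: "\<And>t. (f has_real_derivative f' t) (at t)" and b: "\<And>t. \<bar>f' t\<bar> \<le> C"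
  shows "\<bar>f s - f t\<bar> \<le> C * \<bar>s - t\<bar>"
proof (cases s t rule: linorder_cases)
  case less
  then obtain z where "f t - f s = (t - s) * f' z" using MVT2[of s t f f'] d by blast
  then have "\<bar>f t - f s\<bar> = \<bar>t - s\<bar> * \<bar>f' z\<bar>" by (simp add: abs_mult)
  then have "\<bar>f s - f t\<bar> = \<bar>s - t\<bar> * \<bar>f' z\<bar>" by (simp add: abs_minus_commute)
  also have "\<dots> \<le> \<bar>s - t\<bar> * C" by (intro mult_left_mono b) auto
  finally show ?thesis by (simp add: mult.commute)
next
  case equal then show ?thesis by simp
next
  case greater
  then obtain z where "f s - f t = (s - t) * f' z" using MVT2[of t s f f'] d by blast
  then have "\<bar>f s - f t\<bar> = \<bar>s - t\<bar> * \<bar>f' z\<bar>" by (simp add: abs_mult)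
  also have "\<dots> \<le> \<bar>s - t\<bar> * C" by (intro mult_left_mono b) auto
  finally show ?thesis by (simp add: mult.commute)
qed



lemma K_bounds:
  assumes m: "m > 0" and T: "T > 0" and h: "continuous_on UNIV h" and lo: "\<And>s. lo \<le> h s" and hi: "\<And>s. h s \<le> hi"
  shows "lo / m^2 \<le> Kop m T h t" "Kop m T h t \<le> hi / m^2"
proof -
  have "Kop m T (\<lambda>_. lo) t \<le> Kop m T h t" by (rule K_mono[OF m T continuous_on_const h lo])
  then show "lo / m^2 \<le> Kop m T h t" unfolding K_const[OF m T] .
  have "Kop m T h t \<le> Kop m T (\<lambda>_. hi) t" by (rule K_mono[OF m T h continuous_on_const hi])
  then show "Kop m T h t \<le> hi / m^2" unfolding K_const[OF m T] .
qed

lemma Kd_bound: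
  assumes m: "m > 0" and T: "T > 0" and h: "continuous_on UNIV h" and b: "\<And>s. \<bar>h s\<bar> \<le> H"
  shows "\<bar>Kd m T h t\<bar> \<le> H / m"
proof -
  have lo: "- H \<le> h s" and hi: "h s \<le> H" for s using b[of s] by (simp_all add: abs_le_iff)
  have "Aop m T (\<lambda>_. -H) t \<le> Aop m T h t" by (rule A_mono[OF m T continuous_on_const h lo])
  then have a11: "-H * exp (m*t) / m \<le> Aop m T h t" unfolding A_const[OF m T] .
  have "Aop m T h t \<le> Aop m T (\<lambda>_. H) t" by (rule A_mono[OF m T h continuous_on_const hi])
  then have a12: "Aop m T h t \<le> H * exp (m*t) / m" unfolding A_const[OF m T] .
  have "Bop m T (\<lambda>_. -H) t \<le> Bop m T h t" by (rule B_mono[OF m T continuous_on_const h lo])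
  then have b11: "-H * exp (-m*t) / m \<le> Bop m T h t" unfolding B_const[OF m T] .
  have "Bop m T h t \<le> Bop m T (\<lambda>_. H) t" by (rule B_mono[OF m T h continuous_on_const hi])
  then have b12: "Bop m T h t \<le> H * exp (-m*t) / m" unfolding B_const[OF m T] .
  have x1: "exp (-m*t) * (-H * exp (m*t) / m) \<le> exp (-m*t) * Aop m T h t"
    by (rule mult_left_mono[OF a11]) simp
  have x2: "exp (-m*t) * Aop m T h t \<le> exp (-m*t) * (H * exp (m*t) / m)"
    by (rule mult_left_mono[OF a12]) simp
  have y1: "exp (m*t) * (-H * exp (-m*t) / m) \<le> exp (m*t) * Bop m T h t"
    by (rule mult_left_mono[OF b11]) simp
  have y2: "exp (m*t) * Bop m T h t \<le> exp (m*t) * (H * exp (-m*t) / m)"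
    by (rule mult_left_mono[OF b12]) simp
  have q1: "exp (-m*t) * (-H * exp (m*t) / m) = -H/m" and q2: "exp (-m*t) * (H * exp (m*t) / m) = H/m"
   and q3: "exp (m*t) * (-H * exp (-m*t) / m) = -H/m" and q4: "exp (m*t) * (H * exp (-m*t) / m) = H/m"
    by (simp_all add: exp_minus field_simps)
  have n: "(- exp (-m*t)) * Aop m T h t = - (exp (-m*t) * Aop m T h t)" by simp
  show ?thesis unfolding Kd_def n using x1[unfolded q1] x2[unfolded q2] y1[unfolded q3] y2[unfolded q4]
    by (intro abs_leI) (simp_all add: field_simps)
qed



lemma per_nat:
  assumes p: "\<And>t. F (t + T) = F t"
  shows "F (t + real n * T) = F t"
proof (induction n)
  case 0 then show ?case by simp
next
  case (Suc n)
  have "F (t + real (Suc n) * T) = F ((t + real n * T) + T)" by (simp add: algebra_simps)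
  also have "\<dots> = F t" using p Suc by simp
  finally show ?case .
qed

lemma per_nat_neg:
  assumes p: "\<And>t. F (t + T) = F t"
  shows "F (t - real n * T) = F t"
  using per_nat[of F T, OF p, of "t - real n * T" n] by simp

lemma per_bounded:
  fixes F :: "real \<Rightarrow> real"
  assumes c: "continuous_on UNIV F" and T: "T > 0" and p: "\<And>t. F (t + T) = F t"
  shows "\<exists>B\<ge>0. \<forall>t. \<bar>F t\<bar> \<le> B"
proof -
  have "bounded (F ` {0..T})"
    by (intro compact_imp_bounded compact_continuous_image continuous_on_subset[OF c]) auto
  then obtain B where B: "\<And>y. y \<in> F ` {0..T} \<Longrightarrow> norm y \<le> B" unfolding bounded_iff by blast
  have main: "\<bar>F t\<bar> \<le> B" for t
  proof -
    define k where "k = \<lfloor>t / T\<rfloor>"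
    define s where "s = t - of_int k * T"
    have "of_int k \<le> t / T" "t / T < of_int k + 1" unfolding k_def by linarith+
    then have "of_int k * T \<le> t" "t < (of_int k + 1) * T" using T by (simp_all add: field_simps)
    then have s: "s \<in> {0..T}" unfolding s_def by (auto simp: algebra_simps)
    have "F t = F s"
    proof (cases "k \<ge> 0")
      case True
      then have "t = s + real (nat k) * T" unfolding s_def by simp
      then show ?thesis using per_nat[of F T, OF p, of s "nat k"] by simp
    next
      case False
      then have "t = s - real (nat (-k)) * T" unfolding s_def by simp
      then show ?thesis using per_nat_neg[of F T, OF p, of s "nat (-k)"] by simp
    qed
    then show ?thesis using B[of "F s"] s by auto
  qed
  moreover have "B \<ge> 0" using main[of 0] by linarith
  ultimately show ?thesis by blast
qed

theorem theorem3p3: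
  fixes G T :: real and F :: "real \<Rightarrow> real"
  assumes "G > 0" and "T > 0"
    and "continuous_on UNIV F"
    and "\<And>t. F (t + T) = F t"
  shows "\<exists>x x' :: real \<Rightarrow> real.
           (\<forall>t. (x has_real_derivative x' t) (at t)) \<and>
           (\<forall>t. x' differentiable (at t)) \<and>
           (\<forall>t. x t \<in> {-1<..<1}) \<and>
           (\<forall>t. x (t + T) = x t) \<and>
           (\<forall>t. deriv x' t =
                (G * sqrt (1 - (x t)\<^sup>2) - (x' t)\<^sup>2 / (1 - (x t)\<^sup>2)) * x t
                - (1 - (x t)\<^sup>2) * F t)"
proof -
  note G = assms(1) and T = assms(2) and Fc = assms(3) and Fp = assms(4)
  obtain BF where BF0: "BF \<ge> 0" and BF: "\<And>t. \<bar>F t\<bar> \<le> BF"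
    using per_bounded[OF Fc T Fp] by blast
  define m where "m = G + BF + 1"
  have m1: "m \<ge> 1" and m0: "m > 0" using G BF0 by (auto simp: m_def)
  define M where "M = m^2"
  have Mm: "M \<ge> m" using m1 by (simp add: M_def power2_eq_square)
  have MG: "M \<ge> G + BF + 1" using Mm m_def by simp
  have M0: "M > 0" using MG G BF0 by linarith
  define \<phi> where "\<phi> = (\<lambda>t y. M * y - (G * sin y - F t * cos y))"
  have \<phi>_mono: "\<phi> t y1 \<le> \<phi> t y2" if "y1 \<le> y2" for t y1 y2
  proof -
    have d: "\<phi> t y2 - \<phi> t y1 = M*(y2-y1) - G*(sin y2 - sin y1) + F t * (cos y2 - cos y1)"
      by (simp add: \<phi>_def algebra_simps)
    have s1: "\<bar>sin y2 - sin y1\<bar> \<le> y2 - y1" using sin_lip[of y2 y1] that by simp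
    have c1: "\<bar>cos y2 - cos y1\<bar> \<le> y2 - y1" using cos_lip[of y2 y1] that by simp
    have "G*(sin y2 - sin y1) \<le> G*(y2 - y1)" using s1 G by (intro mult_left_mono) auto
    moreover have "\<bar>F t * (cos y2 - cos y1)\<bar> \<le> BF * (y2 - y1)"
      unfolding abs_mult using BF c1 BF0 by (intro mult_mono) auto
    moreover have "(G + BF) * (y2 - y1) \<le> M * (y2 - y1)" using MG that by (intro mult_right_mono) auto
    ultimately have "- (BF * (y2 - y1)) \<le> F t * (cos y2 - cos y1)"
      "G*(sin y2 - sin y1) \<le> G*(y2 - y1)" "(G + BF) * (y2 - y1) \<le> M * (y2 - y1)"
      by (simp_all only: abs_le_iff) linarith
    moreover have "(G + BF) * (y2 - y1) = G * (y2 - y1) + BF * (y2 - y1)" by (simp add: distrib_right)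
    ultimately show ?thesis using d by linarith
  qed
  have \<phi>_bnd: "\<bar>\<phi> t y\<bar> \<le> M*pi/2 - G" if "\<bar>y\<bar> \<le> pi/2" for t y
  proof -
    have "\<phi> t y \<le> \<phi> t (pi/2)" "\<phi> t (-(pi/2)) \<le> \<phi> t y" using that by (auto intro!: \<phi>_mono)
    moreover have "\<phi> t (pi/2) = M*pi/2 - G" "\<phi> t (-(pi/2)) = -(M*pi/2 - G)" by (simp_all add: \<phi>_def)
    ultimately show ?thesis by auto
  qed
  have \<phi>_cont: "continuous_on UNIV (\<lambda>t. \<phi> t (\<theta> t))" if "continuous_on UNIV \<theta>" for \<theta>
    unfolding \<phi>_def by (intro continuous_intros Fc that)
  have \<phi>_per: "\<phi> (t + T) y = \<phi> t y" for t y by (simp add: \<phi>_def Fp)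
  define H where "H = M*pi/2"
  define C where "C = H/m"
  have C0: "C \<ge> 0" using M0 m0 by (simp add: C_def H_def)
  have HG: "M*pi/2 - G \<le> H" using G by (simp add: H_def)
  define S where "S = {\<theta>. (\<forall>t. \<bar>\<theta> t\<bar> \<le> pi/2) \<and> (\<forall>t. \<theta> (t+T) = \<theta> t) \<and> (\<forall>s t. \<bar>\<theta> s - \<theta> t\<bar> \<le> C*\<bar>s-t\<bar>)}"
  define \<Phi> where "\<Phi> = (\<lambda>\<theta>. Kop m T (\<lambda>t. \<phi> t (\<theta> t)))"
  have Scont: "continuous_on UNIV \<theta>" if "\<theta> \<in> S" for \<theta>
  proof -
    have "C-lipschitz_on UNIV \<theta>" using that C0 unfolding lipschitz_on_def S_def dist_real_def by auto
    then show ?thesis by (rule lipschitz_on_continuous_on)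
  qed
  have hc: "continuous_on UNIV (\<lambda>t. \<phi> t (\<theta> t))" if "\<theta> \<in> S" for \<theta>
    using \<phi>_cont[OF Scont[OF that]] .
  have hp: "\<And>t. (\<lambda>t. \<phi> t (\<theta> t)) (t + T) = (\<lambda>t. \<phi> t (\<theta> t)) t" if "\<theta> \<in> S" for \<theta>
    using that \<phi>_per by (simp add: S_def)
  have hb: "\<And>t. \<bar>\<phi> t (\<theta> t)\<bar> \<le> M*pi/2 - G" if "\<theta> \<in> S" for \<theta>
    using that \<phi>_bnd by (simp add: S_def)
  have GM: "G/M > 0" using G M0 by simp
  have \<Phi>bound: "\<bar>\<Phi> \<theta> t\<bar> \<le> pi/2 - G/M" if "\<theta> \<in> S" for \<theta> t
  proof -
    have lo: "-(M*pi/2 - G) \<le> \<phi> s (\<theta> s)" and hi: "\<phi> s (\<theta> s) \<le> M*pi/2 - G" for s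
      using hb[OF that, of s] by (simp_all add: abs_le_iff)
    have e1: "(M*pi/2 - G) / m^2 = pi/2 - G/M" and e2: "-(M*pi/2 - G) / m^2 = -(pi/2 - G/M)"
      using M0 by (simp_all add: M_def[symmetric] field_simps)
    have k1: "-(M*pi/2 - G) / m^2 \<le> \<Phi> \<theta> t"
      unfolding \<Phi>_def by (rule K_bounds(1)[OF m0 T hc[OF that] lo hi])
    have k2: "\<Phi> \<theta> t \<le> (M*pi/2 - G) / m^2"
      unfolding \<Phi>_def by (rule K_bounds(2)[OF m0 T hc[OF that] lo hi])
    show ?thesis using k1[unfolded e2] k2[unfolded e1] by (intro abs_leI) linarith+
  qed
  have \<Phi>S: "\<Phi> \<theta> \<in> S" if "\<theta> \<in> S" for \<theta>
  proof -
    have "\<bar>\<Phi> \<theta> t\<bar> \<le> pi/2" for t using \<Phi>bound[OF that, of t] GM by linarith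
    moreover have "\<Phi> \<theta> (t+T) = \<Phi> \<theta> t" for t unfolding \<Phi>_def by (rule K_per) (rule hp[OF that])
    moreover have "\<bar>\<Phi> \<theta> s - \<Phi> \<theta> t\<bar> \<le> C*\<bar>s-t\<bar>" for s t
    proof -
      have b: "\<bar>\<phi> s (\<theta> s)\<bar> \<le> H" for s using hb[OF that, of s] HG by linarith
      show ?thesis unfolding \<Phi>_def C_def
        by (rule deriv_lip[OF K_deriv[OF m0 T hc[OF that] hp[OF that]] Kd_bound[OF m0 T hc[OF that] b]])
    qed
    ultimately show ?thesis by (simp add: S_def)
  qed
  have \<Phi>mono: "\<Phi> \<theta>1 t \<le> \<Phi> \<theta>2 t" if "\<theta>1 \<in> S" "\<theta>2 \<in> S" "\<And>t. \<theta>1 t \<le> \<theta>2 t" for \<theta>1 \<theta>2 t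
    unfolding \<Phi>_def by (rule K_mono[OF m0 T hc[OF that(1)] hc[OF that(2)]]) (rule \<phi>_mono[OF that(3)])
  define P where "P = {\<theta>\<in>S. \<forall>t. \<theta> t \<le> \<Phi> \<theta> t}"
  define \<alpha> where "\<alpha> = (\<lambda>_::real. -(pi/2))"
  have \<alpha>S: "\<alpha> \<in> S" using C0 by (simp add: S_def \<alpha>_def)
  have \<alpha>P: "\<alpha> \<in> P"
  proof -
    have "\<alpha> t \<le> \<Phi> \<alpha> t" for t using \<Phi>bound[OF \<alpha>S, of t] GM
      by (simp add: \<alpha>_def abs_le_iff)
    then show ?thesis using \<alpha>S by (simp add: P_def)
  qed
  define \<theta>s where "\<theta>s = (\<lambda>t. Sup ((\<lambda>\<theta>. \<theta> t) ` P))"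
  have Pb: "\<theta> t \<le> pi/2" if "\<theta> \<in> P" for \<theta> t
  proof -
    have "\<bar>\<theta> t\<bar> \<le> pi/2" using that by (simp add: P_def S_def)
    then show ?thesis by (rule abs_le_D1)
  qed
  have bdd: "bdd_above ((\<lambda>\<theta>. \<theta> t) ` P)" for t
    by (rule bdd_aboveI[where M="pi/2"]) (blast intro: Pb)
  have ne: "P \<noteq> {}" using \<alpha>P by blast
  have upper: "\<theta> t \<le> \<theta>s t" if "\<theta> \<in> P" for \<theta> t
    unfolding \<theta>s_def by (rule cSUP_upper[OF that bdd])
  have least: "\<theta>s t \<le> b" if "\<And>\<theta>. \<theta> \<in> P \<Longrightarrow> \<theta> t \<le> b" for t b
    unfolding \<theta>s_def by (rule cSUP_least[OF ne that])
  have \<theta>sS: "\<theta>s \<in> S"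
  proof -
    have "\<bar>\<theta>s t\<bar> \<le> pi/2" for t
    proof -
      have "-(pi/2) \<le> \<theta>s t" using upper[OF \<alpha>P, of t] by (simp add: \<alpha>_def)
      moreover have "\<theta>s t \<le> pi/2" by (rule least) (rule Pb)
      ultimately show ?thesis by auto
    qed
    moreover have "\<theta>s (t+T) = \<theta>s t" for t
    proof -
      have "(\<lambda>\<theta>. \<theta> (t+T)) ` P = (\<lambda>\<theta>. \<theta> t) ` P" by (rule image_cong) (auto simp: P_def S_def)
      then show ?thesis by (simp add: \<theta>s_def)
    qed
    moreover have L: "\<theta>s s \<le> \<theta>s t + C*\<bar>s-t\<bar>" for s t
    proof (rule least)
      fix \<theta> assume th: "\<theta> \<in> P"
      then have "\<bar>\<theta> s - \<theta> t\<bar> \<le> C*\<bar>s-t\<bar>" by (simp add: P_def S_def)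
      then have "\<theta> s \<le> \<theta> t + C*\<bar>s-t\<bar>" using abs_le_D1 by fastforce
      then show "\<theta> s \<le> \<theta>s t + C*\<bar>s-t\<bar>" using upper[OF th, of t] by linarith
    qed
    moreover have "\<bar>\<theta>s s - \<theta>s t\<bar> \<le> C*\<bar>s-t\<bar>" for s t
      using L[of s t] L[of t s] by (auto simp: abs_le_iff abs_minus_commute)
    ultimately show ?thesis by (simp add: S_def)
  qed
  have le1: "\<theta>s t \<le> \<Phi> \<theta>s t" for t
  proof (rule least)
    fix \<theta> assume th: "\<theta> \<in> P"
    then have "\<theta> t \<le> \<Phi> \<theta> t" by (simp add: P_def)
    also have "\<dots> \<le> \<Phi> \<theta>s t" using th \<theta>sS upper[OF th] by (intro \<Phi>mono) (auto simp: P_def)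
    finally show "\<theta> t \<le> \<Phi> \<theta>s t" .
  qed
  have "\<Phi> \<theta>s \<in> P"
    using \<Phi>S[OF \<theta>sS] \<Phi>mono[OF \<theta>sS \<Phi>S[OF \<theta>sS] le1] by (simp add: P_def)
  then have le2: "\<Phi> \<theta>s t \<le> \<theta>s t" for t by (rule upper)
  have fixpt: "\<Phi> \<theta>s = \<theta>s" using le1 le2 by (intro ext antisym) auto
  define h0 where "h0 = (\<lambda>t. \<phi> t (\<theta>s t))"
  have h0c: "continuous_on UNIV h0" unfolding h0_def by (rule hc[OF \<theta>sS])
  have h0p: "\<And>t. h0 (t + T) = h0 t" unfolding h0_def by (rule hp[OF \<theta>sS])
  have \<theta>K: "\<theta>s = Kop m T h0" using fixpt by (simp add: \<Phi>_def h0_def)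
  have D1: "(\<theta>s has_real_derivative Kd m T h0 t) (at t)" for t
    unfolding \<theta>K[THEN eq_reflection] by (rule K_deriv[OF m0 T h0c h0p])
  have D2: "(Kd m T h0 has_real_derivative G * sin (\<theta>s t) - F t * cos (\<theta>s t)) (at t)" for t
  proof -
    have "m^2 * Kop m T h0 t - h0 t = G * sin (\<theta>s t) - F t * cos (\<theta>s t)"
      using \<theta>K by (simp add: h0_def \<phi>_def M_def[symmetric])
    then show ?thesis using Kd_deriv[OF m0 T h0c h0p, of t] by simp
  qed
  have cpos: "cos (\<theta>s t) > 0" for t
  proof -
    have "\<bar>\<theta>s t\<bar> \<le> pi/2 - G/M" using \<Phi>bound[OF \<theta>sS, of t] fixpt by simp
    moreover have "G/M > 0" using G M0 by simp
    ultimately show ?thesis by (intro cos_gt_zero_pi) auto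
  qed
  define x where "x = (\<lambda>t. sin (\<theta>s t))"
  define x' where "x' = (\<lambda>t. cos (\<theta>s t) * Kd m T h0 t)"
  have Dx: "(x has_real_derivative x' t) (at t)" for t
    unfolding x_def x'_def by (rule DERIV_fun_sin[OF D1])
  have Dx': "(x' has_real_derivative
      (- sin (\<theta>s t) * Kd m T h0 t) * Kd m T h0 t + (G * sin (\<theta>s t) - F t * cos (\<theta>s t)) * cos (\<theta>s t)) (at t)" for t
    unfolding x'_def by (rule DERIV_mult[OF DERIV_fun_cos[OF D1] D2])
  have R2: "x' differentiable (at t)" for t using Dx' real_differentiable_def by blast
  have R3: "x t \<in> {-1<..<1}" for t
  proof -
    have "(sin (\<theta>s t))^2 < 1" using cpos[of t] sin_cos_squared_add[of "\<theta>s t"]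
      by (smt (verit) zero_less_power)
    then show "x t \<in> {-1<..<1}" unfolding x_def abs_square_less_1 by auto
  qed
  have R4: "x (t + T) = x t" for t using \<theta>sS by (simp add: x_def S_def)
  have R5: "deriv x' t = (G * sqrt (1 - (x t)\<^sup>2) - (x' t)\<^sup>2 / (1 - (x t)\<^sup>2)) * x t - (1 - (x t)\<^sup>2) * F t" for t
  proof -
    have c2: "1 - (x t)^2 = (cos (\<theta>s t))^2" unfolding x_def using sin_cos_squared_add[of "\<theta>s t"] by linarith
    have sq: "sqrt (1 - (x t)^2) = cos (\<theta>s t)" unfolding c2 using cpos[of t] by simp
    have q: "(x' t)^2 / (1 - (x t)^2) = (Kd m T h0 t)^2"
      unfolding c2 x'_def using cpos[of t] by (simp add: power_mult_distrib)
    have e: "G * sqrt (1 - (x t)^2) - (x' t)^2 / (1 - (x t)^2) = G * cos (\<theta>s t) - (Kd m T h0 t)^2"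
      using sq q by simp
    show ?thesis
      unfolding DERIV_imp_deriv[OF Dx'] e unfolding c2
      by (simp add: x_def algebra_simps power2_eq_square)
  qed
  show ?thesis using Dx R2 R3 R4 R5 by blast
qed

end
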